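(* Let $n>2k$, $k\ge t+3$, and let $\mathcal F\subseteq\binom{[n]}{k}$ be a maximal $t$-intersecting family with $\tau_t(\mathcal F)=t+2$ and $\tau_t(\mathcal T_t(\mathcal F))=t+1$. Suppose $\mathcal T_t(\mathcal F)=\left\{T\in\binom{M}{t+2}: |T\cap W|\ge t+1\right\}$ for some $M\in\binom{[n]}{k+2}$ and $W\in\binom{M}{t+2}$. Then: (i) $\mathcal F=\{F\in\binom{[n]}{k}: W\subseteq F\}\cup\{F\in\binom{[n]}{k}: |F\cap W|=t+1,\ F\cap(M\setminus W)\neq\emptyset\}\cup\{F\in\binom{M}{k}: |F\cap W|=t\}$ (i.e. $\mathcal F$ is the Type II family determined by some $M\in\binom{[n]}{k+2}$, $W\in\binom{M}{t+2}$); (ii) $|\mathcal F|>((t+2)(k-t)+1)\binom{n-t-2}{k-t-2}-(t+2)(k-t)^2\binom{n-t-3}{k-t-3}$.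
   Context: A family is $t$-intersecting if any two members meet in at least $t$ elements. A $t$-cover of a family $\mathcal G$ of subsets of $[n]$ is a set $S\subseteq[n]$ with $|S\cap G|\ge t$ for all $G\in\mathcal G$; $\tau_t(\mathcal G)$ is the minimum size of a $t$-cover, and $\mathcal T_t(\mathcal G)$ is the set of all $t$-covers of $\mathcal G$ of size $\tau_t(\mathcal G)$. A $t$-intersecting $\mathcal F\subseteq\binom{[n]}{k}$ is maximal if no $t$-intersecting subfamily of $\binom{[n]}{k}$ properly contains it. *)

theory Defs
  imports Main
begin

definition ksubsets :: "nat set \<Rightarrow> nat \<Rightarrow> nat set set" where
  "ksubsets S k = {A. A \<subseteq> S \<and> card A = k}"

definition t_intersecting :: "nat \<Rightarrow> nat set set \<Rightarrow> bool" where
  "t_intersecting t F \<longleftrightarrow> (\<forall>A\<in>F. \<forall>B\<in>F. t \<le> card (A \<inter> B))"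

definition t_cover :: "nat \<Rightarrow> nat \<Rightarrow> nat set set \<Rightarrow> nat set \<Rightarrow> bool" where
  "t_cover n t G S \<longleftrightarrow> S \<subseteq> {1..n} \<and> (\<forall>X\<in>G. t \<le> card (S \<inter> X))"

definition tau :: "nat \<Rightarrow> nat \<Rightarrow> nat set set \<Rightarrow> nat" where
  "tau n t G = (LEAST s. \<exists>S. t_cover n t G S \<and> card S = s)"

definition tcovers_min :: "nat \<Rightarrow> nat \<Rightarrow> nat set set \<Rightarrow> nat set set" where
  "tcovers_min n t G = {S. t_cover n t G S \<and> card S = tau n t G}"

definition maximal_t_intersecting :: "nat \<Rightarrow> nat \<Rightarrow> nat \<Rightarrow> nat set set \<Rightarrow> bool" where
  "maximal_t_intersecting n k t F \<longleftrightarrow>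
     F \<subseteq> ksubsets {1..n} k \<and> t_intersecting t F \<and>
     (\<forall>G. F \<subset> G \<and> G \<subseteq> ksubsets {1..n} k \<longrightarrow> \<not> t_intersecting t G)"

end

theory Submission
  imports Defs
begin

lemma choose_top_mono: "m \<le> n \<Longrightarrow> m choose k \<le> (n::nat) choose k"
proof (induction n)
  case 0 then show ?case by simp
next
  case (Suc n)
  have "n choose k \<le> Suc n choose k" by (cases k) auto
  then show ?case using Suc by (cases "m = Suc n") auto
qed

lemma choose_diff_bound:
  "d \<le> N \<Longrightarrow> N choose (Suc r) \<le> ((N - d) choose (Suc r)) + d * ((N - 1) choose r)"
proof (induction d)
  case 0 then show ?case by simp
next
  case (Suc d)
  have e: "N - d = Suc (N - Suc d)" using Suc.prems by simp
  have "(N - d) choose (Suc r) = ((N - Suc d) choose r) + ((N - Suc d) choose (Suc r))"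
    by (simp add: e)
  moreover have "(N - Suc d) choose r \<le> (N - 1) choose r"
    by (rule choose_top_mono) simp
  ultimately show ?case using Suc by simp
qed

theorem lemma2p9:
  fixes n k t :: nat and F :: "nat set set" and M W :: "nat set"
  assumes "n > 2 * k" and "k \<ge> t + 3"
    and "maximal_t_intersecting n k t F"
    and "tau n t F = t + 2"
    and "tau n t (tcovers_min n t F) = t + 1"
    and "M \<in> ksubsets {1..n} (k + 2)" and "W \<in> ksubsets M (t + 2)"
    and "tcovers_min n t F = {T \<in> ksubsets M (t + 2). t + 1 \<le> card (T \<inter> W)}"
  shows "(F = {X \<in> ksubsets {1..n} k. W \<subseteq> X}
           \<union> {X \<in> ksubsets {1..n} k. card (X \<inter> W) = t + 1 \<and> X \<inter> (M - W) \<noteq> {}}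
           \<union> {X \<in> ksubsets M k. card (X \<inter> W) = t})
         \<and> int (card F) > int (((t + 2) * (k - t) + 1) * ((n - t - 2) choose (k - t - 2)))
                        - int ((t + 2) * (k - t)^2 * ((n - t - 3) choose (k - t - 3)))"
proof -
  have Fsub: "F \<subseteq> ksubsets {1..n} k" and Fint: "t_intersecting t F"
    and Fmax: "\<And>G. F \<subset> G \<Longrightarrow> G \<subseteq> ksubsets {1..n} k \<Longrightarrow> \<not> t_intersecting t G"
    using assms(3) unfolding maximal_t_intersecting_def by auto
  have Msub: "M \<subseteq> {1..n}" and cM: "card M = k + 2" using assms(6) by (auto simp: ksubsets_def)
  have WM: "W \<subseteq> M" and cW: "card W = t + 2" using assms(7) by (auto simp: ksubsets_def)
  have finM: "finite M" using Msub finite_subset by blast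
  have finW: "finite W" using WM finM finite_subset by blast
  have cMW: "card (M - W) = k - t" using card_Diff_subset[OF finW WM] cM cW by simp
  have t1: "t \<ge> 1"
  proof (rule ccontr)
    assume "\<not> t \<ge> 1" hence t0: "t = 0" by simp
    have "t_cover n t F {}" using t0 by (simp add: t_cover_def)
    hence "tau n t F = 0" unfolding tau_def by (intro Least_eq_0) (rule exI[of _ "{}"], simp)
    with assms(4) show False by simp
  qed
  define TT where "TT = {T \<in> ksubsets M (t + 2). t + 1 \<le> card (T \<inter> W)}"
  have cov: "\<And>T X. T \<in> TT \<Longrightarrow> X \<in> F \<Longrightarrow> t \<le> card (T \<inter> X)"
    using assms(8) by (auto simp: TT_def tcovers_min_def t_cover_def)
  have noncov: "\<exists>X\<in>F. card (S \<inter> X) < t"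
    if S: "S \<subseteq> {1..n}" "card S = t + 2" "S \<notin> TT" for S
  proof -
    have "S \<notin> tcovers_min n t F" using assms(8) S(3) by (simp add: TT_def)
    hence "\<not> t_cover n t F S" using assms(4) S(2) by (auto simp: tcovers_min_def)
    thus ?thesis using S(1) by (auto simp: t_cover_def not_le)
  qed
  have WT: "W \<in> TT" using WM cW by (simp add: TT_def ksubsets_def)
  have swapT: "insert m (W - {w}) \<in> TT" if wm: "w \<in> W" "m \<in> M - W" for w m
  proof -
    have c1: "card (W - {w}) = t + 1" using wm cW finW by simp
    have "card (insert m (W - {w})) = t + 2" using c1 wm finW by simp
    moreover have "insert m (W - {w}) \<inter> W = W - {w}" using wm by auto
    ultimately show ?thesis using wm WM c1 by (auto simp: TT_def ksubsets_def)
  qed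
  have Fprop: "X \<subseteq> {1..n} \<and> card X = k \<and> finite X" if "X \<in> F" for X
    using Fsub that finite_subset[of X "{1..n}"] by (auto simp: ksubsets_def)
  have a: "t \<le> card (X \<inter> W)" if "X \<in> F" for X
    using cov[OF WT that] by (simp add: Int_commute)
  have b: "M - W \<subseteq> X \<and> X \<subseteq> M" if X: "X \<in> F" "card (X \<inter> W) = t" for X
  proof -
    obtain w' where w': "w' \<in> X \<inter> W" using t1 X(2) by (metis card.empty ex_in_conv not_one_le_zero)
    have MW: "M - W \<subseteq> X"
    proof
      fix m assume m: "m \<in> M - W"
      show "m \<in> X"
      proof (rule ccontr)
        assume "m \<notin> X"
        hence "insert m (W - {w'}) \<inter> X = (X \<inter> W) - {w'}" by auto
        hence "card (insert m (W - {w'}) \<inter> X) = t - 1" using X w' finW by (simp add: card_Diff_singleton)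
        moreover have "t \<le> card (insert m (W - {w'}) \<inter> X)" using cov swapT w' m X by auto
        ultimately show False using t1 by simp
      qed
    qed
    have "(X \<inter> W) \<union> (M - W) \<subseteq> X" using MW by auto
    moreover have "card ((X \<inter> W) \<union> (M - W)) = k"
      using card_Un_disjoint[of "X \<inter> W" "M - W"] finW finM X(2) cMW assms(2) by auto
    ultimately have "(X \<inter> W) \<union> (M - W) = X" using card_subset_eq Fprop[OF X(1)] by metis
    thus ?thesis using WM MW by auto
  qed
  obtain y where y: "y \<in> {1..n}" "y \<notin> M"
  proof -
    have "card M < card {1..n}" using cM assms(1,2) by simp
    hence "\<not> {1..n} \<subseteq> M" using finM card_mono by (metis not_le)
    thus thesis using that by blast
  qed
  have c: "X \<inter> (M - W) \<noteq> {}" if X: "X \<in> F" "card (X \<inter> W) = t + 1" for X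
  proof
    assume e: "X \<inter> (M - W) = {}"
    have "card (W - X) = 1" using card_Diff_subset_Int[of W X] finW cW X(2)
      by (simp add: Int_commute)
    then obtain w where "W - X = {w}" using card_1_singletonE by blast
    hence w: "w \<in> W" "w \<notin> X" by auto
    define S where "S = insert y (W - {w})"
    have yW: "y \<notin> W" using y WM by auto
    have S1: "S \<subseteq> {1..n}" using y WM Msub by (auto simp: S_def)
    have S2: "card S = t + 2" using yW w finW cW by (simp add: S_def)
    have S3: "S \<notin> TT" using y by (auto simp: S_def TT_def ksubsets_def)
    obtain X1 where X1: "X1 \<in> F" "card (S \<inter> X1) < t" using noncov[OF S1 S2 S3] by blast
    have "X1 \<inter> (W - {w}) \<subseteq> S \<inter> X1" by (auto simp: S_def)
    moreover have "finite (S \<inter> X1)" using finW by (simp add: S_def)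
    ultimately have "card (X1 \<inter> (W - {w})) \<le> card (S \<inter> X1)" by (simp add: card_mono)
    hence lt: "card (X1 \<inter> (W - {w})) < t" using X1(2) by linarith
    have wX1: "w \<in> X1"
    proof (rule ccontr)
      assume "w \<notin> X1" hence "X1 \<inter> (W - {w}) = X1 \<inter> W" by auto
      with lt a[OF X1(1)] show False by simp
    qed
    have "X1 \<inter> W = insert w (X1 \<inter> (W - {w}))" using wX1 w by auto
    hence "card (X1 \<inter> W) = card (X1 \<inter> (W - {w})) + 1" using finW by simp
    hence "card (X1 \<inter> W) = t" using lt a[OF X1(1)] by simp
    hence "X1 \<subseteq> M" using b X1 by blast
    hence "X \<inter> X1 \<subseteq> X1 \<inter> (W - {w})" using e w by auto
    moreover have "finite (X1 \<inter> (W - {w}))" using finW by simp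
    ultimately have "card (X \<inter> X1) \<le> card (X1 \<inter> (W - {w}))" by (simp add: card_mono)
    hence "card (X \<inter> X1) < t" using lt by linarith
    moreover have "t \<le> card (X \<inter> X1)" using Fint X X1 by (auto simp: t_intersecting_def)
    ultimately show False by simp
  qed
  define GA where "GA = {X \<in> ksubsets {1..n} k. W \<subseteq> X}"
  define GB where "GB = {X \<in> ksubsets {1..n} k. card (X \<inter> W) = t + 1 \<and> X \<inter> (M - W) \<noteq> {}}"
  define GC where "GC = {X \<in> ksubsets M k. card (X \<inter> W) = t}"
  define G where "G = GA \<union> GB \<union> GC"
  have FG: "F \<subseteq> G"
  proof
    fix X assume X: "X \<in> F"
    have "card (X \<inter> W) \<le> t + 2" using cW finW card_mono[of W "X \<inter> W"] by auto
    moreover have "t \<le> card (X \<inter> W)" using a X by blast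
    ultimately consider "card (X \<inter> W) = t + 2" | "card (X \<inter> W) = t + 1" | "card (X \<inter> W) = t"
      by linarith
    then show "X \<in> G"
    proof cases
      case 1
      hence "X \<inter> W = W" using card_subset_eq[OF finW, of "X \<inter> W"] cW by auto
      thus ?thesis using X Fsub by (auto simp: G_def GA_def)
    next
      case 2 thus ?thesis using X Fsub c by (auto simp: G_def GB_def)
    next
      case 3 thus ?thesis using X Fprop b by (auto simp: G_def GC_def ksubsets_def)
    qed
  qed
  have Gk: "G \<subseteq> ksubsets {1..n} k" using Msub by (auto simp: G_def GA_def GB_def GC_def ksubsets_def)
  have Gfin: "finite X" if "X \<in> G" for X
    using Gk that finite_subset[of X "{1..n}"] by (auto simp: ksubsets_def)
  have keyI: "card (A \<inter> W) + card (B \<inter> W) \<le> t + 2 + card (A \<inter> B \<inter> W)" for A B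
  proof -
    have "card ((A \<inter> W) \<union> (B \<inter> W)) + card ((A \<inter> W) \<inter> (B \<inter> W)) = card (A \<inter> W) + card (B \<inter> W)"
      using card_Un_Int[of "A \<inter> W" "B \<inter> W"] finW by simp
    moreover have "card ((A \<inter> W) \<union> (B \<inter> W)) \<le> t + 2" using card_mono[OF finW, of "(A \<inter> W) \<union> (B \<inter> W)"] cW by auto
    moreover have "(A \<inter> W) \<inter> (B \<inter> W) = A \<inter> B \<inter> W" by auto
    ultimately show ?thesis by simp
  qed
  have GCM: "M - W \<subseteq> X" if "X \<in> GC" for X
  proof -
    have X: "X \<subseteq> M" "card X = k" "card (X \<inter> W) = t" using that by (auto simp: GC_def ksubsets_def)
    have "X = (X \<inter> W) \<union> (X \<inter> (M - W))" using X by auto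
    hence "card X = card (X \<inter> W) + card (X \<inter> (M - W))"
      using card_Un_disjoint[of "X \<inter> W" "X \<inter> (M - W)"] finW finM by auto
    hence "card (X \<inter> (M - W)) = card (M - W)" using X cMW by simp
    hence "X \<inter> (M - W) = M - W" using card_subset_eq[of "M - W" "X \<inter> (M - W)"] finM by auto
    thus ?thesis by auto
  qed
  have GW: "t \<le> card (X \<inter> W)" if "X \<in> G" for X
    using that by (auto simp: G_def GA_def GB_def GC_def Int_absorb1 cW)
  have ordered: "t \<le> card (X \<inter> Y)" if XY: "X \<in> G" "Y \<in> G" "X \<in> GA \<or> (X \<in> GB \<and> Y \<notin> GA) \<or> (X \<in> GC \<and> Y \<in> GC)" for X Y
  proof -
    have fX: "finite X" using Gfin XY(1) by blast
    have kI: "card (X \<inter> W) + card (Y \<inter> W) \<le> t + 2 + card (X \<inter> Y \<inter> W)"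
      by (rule keyI)
    have cXY: "card (X \<inter> Y \<inter> W) \<le> card (X \<inter> Y)" by (rule card_mono) (use fX in auto)
    have "X \<in> GA \<or> (X \<in> GB \<and> Y \<in> GB) \<or> (X \<in> GB \<and> Y \<in> GC) \<or> (X \<in> GC \<and> Y \<in> GC)"
      using XY unfolding G_def by blast
    then consider "X \<in> GA" | "X \<in> GB" "Y \<in> GB" | "X \<in> GB" "Y \<in> GC" | "X \<in> GC" "Y \<in> GC"
      by blast
    then show ?thesis
    proof cases
      case 1
      hence "Y \<inter> W \<subseteq> X \<inter> Y" by (auto simp: GA_def)
      hence "card (Y \<inter> W) \<le> card (X \<inter> Y)" by (rule card_mono[rotated]) (use fX in auto)
      thus ?thesis using GW[OF XY(2)] by linarith
    next
      case 2
      hence "card (X \<inter> W) = t + 1" "card (Y \<inter> W) = t + 1" by (simp_all add: GB_def)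
      thus ?thesis using kI cXY by linarith
    next
      case 3
      obtain m where m: "m \<in> X" "m \<in> M - W" using 3 by (auto simp: GB_def)
      have mY: "m \<in> Y" using GCM 3 m by auto
      have "insert m (X \<inter> Y \<inter> W) \<subseteq> X \<inter> Y" using m mY by auto
      hence "card (insert m (X \<inter> Y \<inter> W)) \<le> card (X \<inter> Y)" by (rule card_mono[rotated]) (use fX in auto)
      moreover have "card (insert m (X \<inter> Y \<inter> W)) = card (X \<inter> Y \<inter> W) + 1" using m finW by simp
      moreover have "card (X \<inter> W) = t + 1" "card (Y \<inter> W) = t" using 3 by (simp_all add: GB_def GC_def)
      ultimately show ?thesis using kI by linarith
    next
      case 4
      have "(M - W) \<union> (X \<inter> Y \<inter> W) \<subseteq> X \<inter> Y" using GCM 4 by auto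
      hence "card ((M - W) \<union> (X \<inter> Y \<inter> W)) \<le> card (X \<inter> Y)" by (rule card_mono[rotated]) (use fX in auto)
      moreover have "card ((M - W) \<union> (X \<inter> Y \<inter> W)) = (k - t) + card (X \<inter> Y \<inter> W)"
        using card_Un_disjoint[of "M - W" "X \<inter> Y \<inter> W"] finM finW cMW by auto
      moreover have "card (X \<inter> W) = t" "card (Y \<inter> W) = t" using 4 by (simp_all add: GC_def)
      ultimately show ?thesis using kI assms(2) by linarith
    qed
  qed
  have Gint: "t \<le> card (X \<inter> Y)" if XY: "X \<in> G" "Y \<in> G" for X Y
  proof -
    have "(X \<in> GA \<or> (X \<in> GB \<and> Y \<notin> GA) \<or> (X \<in> GC \<and> Y \<in> GC)) \<or>
          (Y \<in> GA \<or> (Y \<in> GB \<and> X \<notin> GA) \<or> (Y \<in> GC \<and> X \<in> GC))"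
      using XY unfolding G_def by blast
    thus ?thesis
    proof
      assume "X \<in> GA \<or> (X \<in> GB \<and> Y \<notin> GA) \<or> (X \<in> GC \<and> Y \<in> GC)"
      thus ?thesis using ordered[OF XY] by blast
    next
      assume "Y \<in> GA \<or> (Y \<in> GB \<and> X \<notin> GA) \<or> (Y \<in> GC \<and> X \<in> GC)"
      hence "t \<le> card (Y \<inter> X)" using ordered[OF XY(2,1)] by blast
      thus ?thesis by (simp add: Int_commute)
    qed
  qed
  have GF: "G \<subseteq> F"
  proof
    fix X assume X: "X \<in> G"
    show "X \<in> F"
    proof (rule ccontr)
      assume "X \<notin> F"
      hence "F \<subset> insert X F" by auto
      moreover have "insert X F \<subseteq> ksubsets {1..n} k" using X Gk Fsub by auto
      moreover have "insert X F \<subseteq> G" using X FG by auto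
      hence "t_intersecting t (insert X F)"
        unfolding t_intersecting_def using Gint by blast
      ultimately show False using Fmax by blast
    qed
  qed
  have FeqG: "F = G" using FG GF by auto
  define Rest where "Rest = {1..n} - M"
  define r where "r = k - t - 2"
  have cRest: "card Rest = n - k - 2" using card_Diff_subset[OF finM Msub] cM by (simp add: Rest_def)
  have finRest: "finite Rest" by (simp add: Rest_def)
  define AA where "AA = (\<lambda>Y. W \<union> Y) ` ksubsets ({1..n} - W) r"
  define BB where "BB = (\<lambda>((w, m), Y). insert m (W - {w}) \<union> Y) ` ((W \<times> (M - W)) \<times> ksubsets Rest r)"
  have "W \<noteq> {}" using cW by auto
  then obtain w1 where w1: "w1 \<in> W" by blast
  have "card (W - {w1}) = t + 1" using w1 finW cW by simp
  hence "W - {w1} \<noteq> {}" by (metis card.empty nat.distinct(1) Suc_eq_plus1)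
  then obtain w2 where w2: "w2 \<in> W - {w1}" by blast
  define X0 where "X0 = M - {w1, w2}"
  have AAG: "AA \<subseteq> G"
  proof
    fix X assume "X \<in> AA"
    then obtain Y where Y: "Y \<subseteq> {1..n} - W" "card Y = r" and X: "X = W \<union> Y"
      by (auto simp: AA_def ksubsets_def)
    have "finite Y" using Y(1) finite_subset by blast
    moreover have "W \<inter> Y = {}" using Y(1) by auto
    ultimately have "card X = t + 2 + r" using X Y finW cW card_Un_disjoint[of W Y] by simp
    hence "card X = k" using assms(2) by (simp add: r_def)
    thus "X \<in> G" using X Y WM Msub by (auto simp: G_def GA_def ksubsets_def)
  qed
  have cAA: "card AA = (n - t - 2) choose r"
  proof -
    have "inj_on (\<lambda>Y. W \<union> Y) (ksubsets ({1..n} - W) r)"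
    proof (rule inj_onI)
      fix Y1 Y2 assume "Y1 \<in> ksubsets ({1..n} - W) r" "Y2 \<in> ksubsets ({1..n} - W) r" "W \<union> Y1 = W \<union> Y2"
      thus "Y1 = Y2" by (auto simp: ksubsets_def)
    qed
    hence "card AA = card (ksubsets ({1..n} - W) r)" by (simp add: AA_def card_image)
    also have "\<dots> = card ({1..n} - W) choose r" unfolding ksubsets_def by (rule n_subsets) simp
    also have "card ({1..n} - W) = n - t - 2" using card_Diff_subset[OF finW] WM Msub cW by auto
    finally show ?thesis .
  qed
  have BBkey: "(insert m (W - {w}) \<union> Y) - M = Y \<and> (insert m (W - {w}) \<union> Y) \<inter> (M - W) = {m}
      \<and> W - (insert m (W - {w}) \<union> Y) = {w}"
    if "w \<in> W" "m \<in> M - W" "Y \<subseteq> Rest" for w m Y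
    using that WM by (auto simp: Rest_def)
  have BBG: "BB \<subseteq> G"
  proof
    fix X assume "X \<in> BB"
    then obtain w m Y where wmY: "w \<in> W" "m \<in> M - W" "Y \<subseteq> Rest" "card Y = r"
      and X: "X = insert m (W - {w}) \<union> Y"
      by (auto simp: BB_def ksubsets_def)
    have fY: "finite Y" using wmY(3) finRest finite_subset by blast
    have c1: "card (insert m (W - {w})) = t + 2" using wmY finW cW by simp
    have "insert m (W - {w}) \<inter> Y = {}" using wmY WM by (auto simp: Rest_def)
    hence "card X = t + 2 + card Y" using X c1 fY finW card_Un_disjoint[of "insert m (W - {w})" Y] by simp
    hence "card X = t + 2 + r" using wmY(4) by simp
    hence cX: "card X = k" using assms(2) by (simp add: r_def)
    have "X \<inter> W = W - {w}" using X wmY WM by (auto simp: Rest_def)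
    hence cXW: "card (X \<inter> W) = t + 1" using wmY finW cW by simp
    have "m \<in> X \<inter> (M - W)" using X wmY by auto
    moreover have "X \<subseteq> {1..n}" using X wmY WM Msub by (auto simp: Rest_def)
    ultimately show "X \<in> G" using cX cXW by (auto simp: G_def GB_def ksubsets_def)
  qed
  have cBB: "card BB = (t + 2) * (k - t) * ((n - k - 2) choose r)"
  proof -
    have "inj_on (\<lambda>((w, m), Y). insert m (W - {w}) \<union> Y) ((W \<times> (M - W)) \<times> ksubsets Rest r)"
    proof (rule inj_onI)
      fix p q assume p: "p \<in> (W \<times> (M - W)) \<times> ksubsets Rest r" and q: "q \<in> (W \<times> (M - W)) \<times> ksubsets Rest r"
        and e: "(\<lambda>((w, m), Y). insert m (W - {w}) \<union> Y) p = (\<lambda>((w, m), Y). insert m (W - {w}) \<union> Y) q"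
      obtain w m Y where pp: "p = ((w, m), Y)" by (metis prod.collapse)
      obtain w' m' Y' where qq: "q = ((w', m'), Y')" by (metis prod.collapse)
      have h1: "w \<in> W" "m \<in> M - W" "Y \<subseteq> Rest" using p pp by (auto simp: ksubsets_def)
      have h2: "w' \<in> W" "m' \<in> M - W" "Y' \<subseteq> Rest" using q qq by (auto simp: ksubsets_def)
      have e': "insert m (W - {w}) \<union> Y = insert m' (W - {w'}) \<union> Y'" using e pp qq by simp
      note b1 = BBkey[OF h1] and b2 = BBkey[OF h2]
      have k1: "Y = Y'" using conjunct1[OF b1] conjunct1[OF b2] e' by metis
      have k2: "{m} = {m'}" using conjunct1[OF conjunct2[OF b1]] conjunct1[OF conjunct2[OF b2]] e' by metis
      have k3: "{w} = {w'}" using conjunct2[OF conjunct2[OF b1]] conjunct2[OF conjunct2[OF b2]] e' by metis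
      have "Y = Y'" "m = m'" "w = w'" using k1 k2 k3 by auto
      thus "p = q" using pp qq by simp
    qed
    hence "card BB = card ((W \<times> (M - W)) \<times> ksubsets Rest r)" by (simp add: BB_def card_image)
    also have "\<dots> = card W * card (M - W) * card (ksubsets Rest r)" by (simp add: card_cartesian_product)
    also have "card (ksubsets Rest r) = card Rest choose r" unfolding ksubsets_def by (rule n_subsets[OF finRest])
    finally show ?thesis using cW cMW cRest by simp
  qed
  have s: "{w1, w2} \<subseteq> M" using w1 w2 WM by auto
  have c2: "card {w1, w2} = 2" using w2 by auto
  have X0W: "card (X0 \<inter> W) = t"
  proof -
    have "X0 \<inter> W = W - {w1, w2}" using WM by (auto simp: X0_def)
    moreover have "card (W - {w1, w2}) = t" using card_Diff_subset[of "{w1,w2}" W] w1 w2 c2 cW by simp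
    ultimately show ?thesis by simp
  qed
  have X0G: "X0 \<in> G"
  proof -
    have "card X0 = k" using card_Diff_subset[OF _ s] c2 cM by (simp add: X0_def)
    thus ?thesis using X0W Msub by (auto simp: G_def GC_def ksubsets_def X0_def)
  qed
  have AAW: "card (X \<inter> W) = t + 2" if "X \<in> AA" for X
    using that cW by (auto simp: AA_def Int_absorb1)
  have BBW: "card (X \<inter> W) = t + 1" if XB: "X \<in> BB" for X
  proof -
    obtain w m Y where wmY: "w \<in> W" "m \<in> M - W" "Y \<subseteq> Rest"
      and X: "X = insert m (W - {w}) \<union> Y" using XB by (auto simp: BB_def ksubsets_def)
    have "X \<inter> W = W - {w}" using X wmY WM by (auto simp: Rest_def)
    thus ?thesis using wmY finW cW by simp
  qed
  have dis1: "AA \<inter> BB = {}"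
  proof (rule equals0I)
    fix X assume XX: "X \<in> AA \<inter> BB"
    have "card (X \<inter> W) = t + 2" using XX by (intro AAW) blast
    moreover have "card (X \<inter> W) = t + 1" using XX by (intro BBW) blast
    ultimately show False by simp
  qed
  have X0n: "X0 \<notin> AA \<union> BB"
  proof
    assume "X0 \<in> AA \<union> BB"
    hence "card (X0 \<inter> W) = t + 2 \<or> card (X0 \<inter> W) = t + 1" using AAW BBW by blast
    thus False using X0W by simp
  qed
  have fks: "finite (ksubsets S j)" if "finite S" for S j
    using that finite_subset[of "ksubsets S j" "Pow S"] by (auto simp: ksubsets_def)
  have finAA: "finite AA" unfolding AA_def by (rule finite_imageI) (rule fks, simp)
  have finBB: "finite BB" unfolding BB_def
    by (rule finite_imageI) (use fks[OF finRest] finW finM in auto)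
  have "card (insert X0 (AA \<union> BB)) = card AA + card BB + 1"
    using X0n dis1 finAA finBB card_Un_disjoint[of AA BB] by simp
  moreover have "insert X0 (AA \<union> BB) \<subseteq> F" using AAG BBG X0G FeqG by auto
  moreover have "finite F" using Fsub finite_subset[of F "Pow {1..n}"] by (auto simp: ksubsets_def)
  ultimately have lowF: "card AA + card BB + 1 \<le> card F" using card_mono[of F "insert X0 (AA \<union> BB)"] by simp
  define P where "P = (t + 2) * (k - t)"
  define B1 where "B1 = (n - t - 2) choose (k - t - 2)"
  define B2 where "B2 = (n - t - 3) choose (k - t - 3)"
  define B3 where "B3 = (n - k - 2) choose (k - t - 2)"
  have low: "B1 + P * B3 + 1 \<le> card F" using lowF cAA cBB by (simp add: B1_def B3_def P_def r_def)
  have bb: "B1 \<le> B3 + (k - t) * B2"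
  proof -
    have "(n - t - 2) choose (Suc (k - t - 3)) \<le> ((n - t - 2 - (k - t)) choose (Suc (k - t - 3))) + (k - t) * ((n - t - 2 - 1) choose (k - t - 3))"
      by (rule choose_diff_bound) (use assms(1,2) in linarith)
    moreover have "Suc (k - t - 3) = k - t - 2" using assms(2) by simp
    moreover have "n - t - 2 - (k - t) = n - k - 2" using assms(1,2) by simp
    moreover have "n - t - 2 - 1 = n - t - 3" by simp
    ultimately show ?thesis by (simp add: B1_def B2_def B3_def)
  qed
  have "P * B1 \<le> P * B3 + P * (k - t) * B2" using mult_le_mono2[OF bb, of P] by (simp add: algebra_simps)
  hence "(P + 1) * B1 < card F + P * (k - t) * B2" using low by simp
  hence ineq: "int ((P + 1) * B1) - int (P * (k - t) * B2) < int (card F)" by linarith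
  have "(t + 2) * (k - t)^2 = P * (k - t)" unfolding P_def power2_eq_square by (rule mult.assoc[symmetric])
  with ineq have "int (card F) > int (((t + 2) * (k - t) + 1) * ((n - t - 2) choose (k - t - 2)))
                        - int ((t + 2) * (k - t)^2 * ((n - t - 3) choose (k - t - 3)))"
    by (simp add: P_def B1_def B2_def)
  thus ?thesis using FeqG by (simp add: G_def GA_def GB_def GC_def)
qed

end
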